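(* Let $n\ge 1$ be an integer and let $A_1,A_2,A_4>0$ be constants. For each $\alpha$ in some interval $(0,\alpha_0)$ let $u^\alpha,\bar u^\alpha:\mathbb{R}\to\mathbb{R}$ be functions with $u^\alpha\in C^1(\mathbb{R})$ and $\bar u^\alpha\in C^{2n}(\mathbb{R})$ satisfying $$|u^\alpha|<A_1,\quad |\bar u^\alpha|<A_1,\qquad \int_{\mathbb{R}}|u^\alpha_x|\,dx<A_2,\quad \int_{\mathbb{R}}|\bar u^\alpha_x|\,dx<A_2,$$ $$\left\|\frac{\partial^j}{\partial x^j}\bar u^\alpha\right\|_{L^\infty}<\frac{A_4}{\alpha^j}\qquad\text{for } 1\le j\le 2n-1.$$ Let $f\in C^\infty(\mathbb{R})$ have compact support. Then $$\lim_{\alpha\to 0}\ \alpha^{2n}\int_{-\infty}^{\infty}\left(\frac{\partial^{2n}}{\partial x^{2n}}\bar u^\alpha\right)\bar u^\alpha_x\, f\,dx=0.$$ *)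

theory Defs
  imports "HOL-Analysis.Analysis"
begin

definition Ck :: "nat \<Rightarrow> (real \<Rightarrow> real) \<Rightarrow> bool" where
  "Ck k f \<longleftrightarrow>
     (\<forall>j<k. \<forall>x. ((deriv ^^ j) f has_real_derivative (deriv ^^ Suc j) f x) (at x))
     \<and> continuous_on UNIV ((deriv ^^ k) f)"

definition Cinf :: "(real \<Rightarrow> real) \<Rightarrow> bool" where
  "Cinf f \<longleftrightarrow> (\<forall>k. Ck k f)"

definition has_compact_support :: "(real \<Rightarrow> real) \<Rightarrow> bool" where
  "has_compact_support f \<longleftrightarrow> compact (closure {x. f x \<noteq> 0})"

end

theory Submission
  imports Defs
begin

theorem lemma2:
  fixes n :: nat and A1 A2 A4 \<alpha>0 :: real
    and u ubar :: "real \<Rightarrow> real \<Rightarrow> real" and f :: "real \<Rightarrow> real"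
  assumes n: "n \<ge> 1"
    and A: "A1 > 0" "A2 > 0" "A4 > 0" and a0: "\<alpha>0 > 0"
    and u_C1: "\<And>\<alpha>. \<alpha> \<in> {0<..<\<alpha>0} \<Longrightarrow> Ck 1 (u \<alpha>)"
    and ubar_C2n: "\<And>\<alpha>. \<alpha> \<in> {0<..<\<alpha>0} \<Longrightarrow> Ck (2*n) (ubar \<alpha>)"
    and u_bd: "\<And>\<alpha> x. \<alpha> \<in> {0<..<\<alpha>0} \<Longrightarrow> \<bar>u \<alpha> x\<bar> < A1"
    and ubar_bd: "\<And>\<alpha> x. \<alpha> \<in> {0<..<\<alpha>0} \<Longrightarrow> \<bar>ubar \<alpha> x\<bar> < A1"
    and u_tv: "\<And>\<alpha>. \<alpha> \<in> {0<..<\<alpha>0} \<Longrightarrow>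
                 (\<integral>\<^sup>+ x. ennreal \<bar>deriv (u \<alpha>) x\<bar> \<partial>lborel) < ennreal A2"
    and ubar_tv: "\<And>\<alpha>. \<alpha> \<in> {0<..<\<alpha>0} \<Longrightarrow>
                 (\<integral>\<^sup>+ x. ennreal \<bar>deriv (ubar \<alpha>) x\<bar> \<partial>lborel) < ennreal A2"
    and ubar_deriv_bd: "\<And>\<alpha> j. \<alpha> \<in> {0<..<\<alpha>0} \<Longrightarrow> 1 \<le> j \<Longrightarrow> j \<le> 2*n - 1 \<Longrightarrow>
                 \<exists>B < A4 / \<alpha> ^ j. \<forall>x. \<bar>(deriv ^^ j) (ubar \<alpha>) x\<bar> \<le> B"
    and f_smooth: "Cinf f"
    and f_supp: "has_compact_support f"
  shows "((\<lambda>\<alpha>. \<alpha> ^ (2*n) *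
            (\<integral>x. (deriv ^^ (2*n)) (ubar \<alpha>) x * deriv (ubar \<alpha>) x * f x \<partial>lborel))
          \<longlongrightarrow> 0) (at_right 0)"
  proof -
  define N where "N = 2*n - 1"
  have N1: "N \<ge> 1" and N2: "2*n = Suc N" using n by (auto simp: N_def)
  have Nodd: "(-1::real) ^ N = -1"
  proof -
    have "N = Suc (2*(n-1))" using n by (simp add: N_def)
    then show ?thesis by (simp only: power_minus1_odd)
  qed
  define F where "F c = (deriv ^^ c) f" for c
  define W where "W a p = (deriv ^^ Suc p) (ubar a)" for a p
  have Fder: "(F c has_real_derivative F (Suc c) x) (at x)" for c x
  proof -
    have "Ck (Suc c) f" using f_smooth unfolding Cinf_def by blast
    then show ?thesis unfolding Ck_def F_def by blast
  qed
  have Fcont: "continuous_on UNIV (F c)" for c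
    using Fder by (meson DERIV_isCont continuous_at_imp_continuous_on)
  obtain B0 where B0: "\<And>x. x \<in> closure {x. f x \<noteq> 0} \<Longrightarrow> norm x \<le> B0"
    using f_supp unfolding has_compact_support_def
    by (meson bounded_iff compact_imp_bounded)
  define B where "B = \<bar>B0\<bar>"
  have Bf: "f x = 0" if "\<bar>x\<bar> > B" for x
  proof (rule ccontr)
    assume "f x \<noteq> 0"
    then have "x \<in> closure {x. f x \<noteq> 0}" by (simp add: closure_def)
    then have "norm x \<le> B0" by (rule B0)
    then show False using that by (simp add: B_def)
  qed
  have Fzero: "F c x = 0" if "\<bar>x\<bar> > B" for c x
    using that
  proof (induction c arbitrary: x)
    case 0
    then show ?case by (simp add: F_def Bf)
  next
    case (Suc c)
    have "((\<lambda>_. 0) has_real_derivative 0) (at x)" by simp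
    then have "(F c has_real_derivative 0) (at x)"
      by (rule has_field_derivative_transform_within_open[where S="{y. \<bar>y\<bar> > B}"])
         (use Suc in \<open>auto intro!: open_Collect_less continuous_intros\<close>)
    then have "deriv (F c) x = 0" by (rule DERIV_imp_deriv)
    then show ?case by (simp add: F_def)
  qed
  define R where "R = B + 1"
  have RB: "R > B" and R0: "R > 0" by (auto simp: R_def B_def)
  have Wder: "(W a p has_real_derivative W a (Suc p) x) (at x)"
    if "a \<in> {0<..<\<alpha>0}" "p < N" for a p x
  proof -
    have "Ck (Suc N) (ubar a)" using ubar_C2n[OF that(1)] N2 by simp
    then show ?thesis unfolding Ck_def W_def using that(2) by auto
  qed
  have Wcont: "continuous_on UNIV (W a p)"
    if "a \<in> {0<..<\<alpha>0}" "p \<le> N" for a p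
  proof (cases "p < N")
    case True
    then show ?thesis using Wder[OF that(1) True]
      by (meson DERIV_isCont continuous_at_imp_continuous_on)
  next
    case False
    then have "p = N" using that by simp
    have "Ck (Suc N) (ubar a)" using ubar_C2n[OF that(1)] N2 by simp
    then show ?thesis unfolding Ck_def W_def \<open>p = N\<close> by auto
  qed
  have Wbd: "\<bar>W a p x\<bar> \<le> A4 / a ^ Suc p"
    if ap: "a \<in> {0<..<\<alpha>0}" "p < N" for a p x
  proof -
    obtain C where "C < A4 / a ^ Suc p" "\<forall>x. \<bar>(deriv ^^ Suc p) (ubar a) x\<bar> \<le> C"
      using ubar_deriv_bd[OF ap(1), of "Suc p"] ap(2) N_def by auto
    then show ?thesis unfolding W_def by (meson order_trans less_imp_le)
  qed
  have W0: "W a 0 = deriv (ubar a)" for a by (simp add: W_def)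
  have intg: "(\<lambda>x. W a p x * W a q x * F c x) integrable_on {-R..R}"
    if "a \<in> {0<..<\<alpha>0}" "p \<le> N" "q \<le> N" for a p q c
    by (intro integrable_continuous_interval continuous_on_mult
          continuous_on_subset[OF Wcont[OF that(1,2)]] continuous_on_subset[OF Wcont[OF that(1,3)]]
          continuous_on_subset[OF Fcont]) auto
  have Wl1: "integral {-R..R} (\<lambda>x. \<bar>W a 0 x\<bar>) \<le> A2" if a: "a \<in> {0<..<\<alpha>0}" for a
  proof -
    have "(\<lambda>x. \<bar>W a 0 x\<bar>) integrable_on {-R..R}"
      by (intro integrable_continuous_interval continuous_on_rabs
          continuous_on_subset[OF Wcont[OF a]]) auto
    then have hi: "((\<lambda>x. \<bar>W a 0 x\<bar>) has_integral integral {-R..R} (\<lambda>x. \<bar>W a 0 x\<bar>)) {-R..R}"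
      by blast
    have "ennreal (integral {-R..R} (\<lambda>x. \<bar>W a 0 x\<bar>))
          = (\<integral>\<^sup>+ x. ennreal (indicator {-R..R} x * \<bar>W a 0 x\<bar>) \<partial>lborel)"
      using nn_integral_has_integral_lebesgue[OF _ hi] by simp
    also have "\<dots> \<le> (\<integral>\<^sup>+ x. ennreal \<bar>deriv (ubar a) x\<bar> \<partial>lborel)"
      by (intro nn_integral_mono ennreal_leI) (auto simp: W0 indicator_def)
    also have "\<dots> < ennreal A2" by (rule ubar_tv[OF a])
    finally show ?thesis
      by (metis ennreal_less_iff integral_nonneg abs_ge_zero hi has_integral_integrable less_imp_le)
  qed
  define Bi where "Bi a p q c = integral {-R..R} (\<lambda>x. W a p x * W a q x * F c x)" for a p q c
  have IBP: "Bi a (Suc p) q c + Bi a p (Suc q) c + Bi a p q (Suc c) = 0"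
    if a: "a \<in> {0<..<\<alpha>0}" and pq: "p < N" "q < N" for a p q c
  proof -
    define h where "h x = W a p x * W a q x * F c x" for x
    define D where "D x = W a (Suc p) x * W a q x * F c x + W a p x * W a (Suc q) x * F c x
        + W a p x * W a q x * F (Suc c) x" for x
    have hd: "(h has_real_derivative D x) (at x)" for x
    proof -
      have "(h has_real_derivative ((W a (Suc p) x * W a q x + W a (Suc q) x * W a p x) * F c x
              + F (Suc c) x * (W a p x * W a q x))) (at x)"
        unfolding h_def
        by (intro DERIV_mult Wder[OF a] Fder pq)
      then show ?thesis by (simp add: D_def algebra_simps)
    qed
    have "(D has_integral h R - h (-R)) {-R..R}"
      by (intro fundamental_theorem_of_calculus)
         (use R0 hd in \<open>auto simp: has_real_derivative_iff_has_vector_derivative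
             intro: has_vector_derivative_at_within\<close>)
    moreover have "h R = 0" "h (-R) = 0" using Fzero RB by (auto simp: h_def)
    ultimately have "integral {-R..R} D = 0" by (simp add: integral_unique)
    moreover have "integral {-R..R} D = Bi a (Suc p) q c + Bi a p (Suc q) c + Bi a p q (Suc c)"
      unfolding D_def Bi_def
      using intg[OF a, of "Suc p" q c] intg[OF a, of p "Suc q" c] intg[OF a, of p q "Suc c"] pq
      by (subst integral_add, auto intro!: integrable_add)+
    ultimately show ?thesis by simp
  qed
  have ev: "eventually (\<lambda>a. a \<in> {0<..<\<alpha>0}) (at_right (0::real))"
    using a0 by (auto simp: eventually_at_right)
  have good: "\<forall>p c. p + q + c \<le> N \<longrightarrow> c \<ge> 1 \<longrightarrow>
      ((\<lambda>a. a ^ Suc N * Bi a p q c) \<longlongrightarrow> 0) (at_right 0)" for q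
  proof (induction q)
    case 0
    show ?case
    proof (intro allI impI)
      fix p c assume pc: "p + 0 + c \<le> N" "1 \<le> c"
      then have pN: "p < N" by simp
      obtain M where M: "\<And>x. x \<in> {-R..R} \<Longrightarrow> \<bar>F c x\<bar> \<le> M"
      proof -
        have "compact (F c ` {-R..R})"
          by (intro compact_continuous_image continuous_on_subset[OF Fcont]) auto
        then show ?thesis using that by (force dest!: compact_imp_bounded simp: bounded_iff)
      qed
      have M0: "M \<ge> 0" using M[of 0] R0 by auto
      have bnd: "norm (a ^ Suc N * Bi a p 0 c) \<le> A4 * M * A2 * a ^ (N - p)"
        if a: "a \<in> {0<..<\<alpha>0}" for a
      proof -
        define K where "K = A4 / a ^ Suc p"
        have K0: "K \<ge> 0" using a A by (simp add: K_def)
        have "norm (Bi a p 0 c) \<le> integral {-R..R} (\<lambda>x. K * M * \<bar>W a 0 x\<bar>)"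
          unfolding Bi_def
        proof (rule Henstock_Kurzweil_Integration.integral_norm_bound_integral)
          show "(\<lambda>x. W a p x * W a 0 x * F c x) integrable_on {-R..R}"
            using intg[OF a, of p 0 c] pN by simp
          show "(\<lambda>x. K * M * \<bar>W a 0 x\<bar>) integrable_on {-R..R}"
            by (intro integrable_continuous_interval continuous_on_mult continuous_on_const
              continuous_on_rabs continuous_on_subset[OF Wcont[OF a]]) auto
          fix x assume x: "x \<in> {-R..R}"
          have "\<bar>W a p x\<bar> * \<bar>F c x\<bar> \<le> K * M"
            using Wbd[OF a pN, of x] M[OF x] K0 by (intro mult_mono) (auto simp: K_def)
          then have "\<bar>W a p x\<bar> * \<bar>F c x\<bar> * \<bar>W a 0 x\<bar> \<le> K * M * \<bar>W a 0 x\<bar>"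
            by (rule mult_right_mono) simp
          then show "norm (W a p x * W a 0 x * F c x) \<le> K * M * \<bar>W a 0 x\<bar>"
            by (simp add: abs_mult mult_ac)
        qed
        also have "\<dots> = K * M * integral {-R..R} (\<lambda>x. \<bar>W a 0 x\<bar>)" by simp
        also have "\<dots> \<le> K * M * A2"
          using Wl1[OF a] K0 M0 by (intro mult_left_mono) auto
        finally have nb: "norm (Bi a p 0 c) \<le> K * M * A2" .
        have pw: "a ^ Suc N = a ^ (N - p) * a ^ Suc p"
          using pN by (simp flip: power_add)
        have "a ^ Suc p * norm (Bi a p 0 c) \<le> a ^ Suc p * (K * M * A2)"
          using a nb by (intro mult_left_mono) auto
        also have "a ^ Suc p * (K * M * A2) = A4 * M * A2"
          using a by (simp add: K_def)
        finally have nb2: "a ^ Suc p * norm (Bi a p 0 c) \<le> A4 * M * A2" .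
        have "norm (a ^ Suc N * Bi a p 0 c) = a ^ (N - p) * (a ^ Suc p * norm (Bi a p 0 c))"
          using a unfolding pw by (simp add: norm_mult abs_mult)
        also have "\<dots> \<le> a ^ (N - p) * (A4 * M * A2)"
          using a nb2 by (intro mult_left_mono) auto
        finally show ?thesis by (simp add: mult_ac)
      qed
      have "((\<lambda>a. A4 * M * A2 * a ^ (N - p)) \<longlongrightarrow> A4 * M * A2 * 0 ^ (N - p)) (at_right (0::real))"
        by (intro tendsto_intros)
      then have lim: "((\<lambda>a. A4 * M * A2 * a ^ (N - p)) \<longlongrightarrow> 0) (at_right (0::real))"
      proof -
        have "(0::real) ^ (N - p) = 0" using pN by simp
        then show ?thesis using \<open>(_ \<longlongrightarrow> A4 * M * A2 * 0 ^ (N - p)) _\<close> by (metis mult_zero_right)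
      qed
      show "((\<lambda>a. a ^ Suc N * Bi a p 0 c) \<longlongrightarrow> 0) (at_right 0)"
        by (rule Lim_null_comparison[OF eventually_mono[OF ev bnd] lim])
    qed
  next
    case (Suc q)
    show ?case
    proof (intro allI impI)
      fix p c assume pc: "p + Suc q + c \<le> N" "1 \<le> c"
      have l1: "((\<lambda>a. a ^ Suc N * Bi a (Suc p) q c) \<longlongrightarrow> 0) (at_right 0)"
        using Suc.IH pc by auto
      have l2: "((\<lambda>a. a ^ Suc N * Bi a p q (Suc c)) \<longlongrightarrow> 0) (at_right 0)"
        using Suc.IH pc by auto
      have "((\<lambda>a. - (a ^ Suc N * Bi a (Suc p) q c) - a ^ Suc N * Bi a p q (Suc c)) \<longlongrightarrow> - 0 - 0) (at_right 0)"
        by (intro tendsto_intros l1 l2)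
      moreover have "eventually (\<lambda>a. - (a ^ Suc N * Bi a (Suc p) q c) - a ^ Suc N * Bi a p q (Suc c)
          = a ^ Suc N * Bi a p (Suc q) c) (at_right 0)"
      proof (rule eventually_mono[OF ev])
        fix a assume a: "a \<in> {0<..<\<alpha>0}"
        have "Bi a (Suc p) q c + Bi a p (Suc q) c + Bi a p q (Suc c) = 0"
          using IBP[OF a] pc by simp
        then show "- (a ^ Suc N * Bi a (Suc p) q c) - a ^ Suc N * Bi a p q (Suc c)
          = a ^ Suc N * Bi a p (Suc q) c"
        proof -
          have e: "Bi a p (Suc q) c = - Bi a (Suc p) q c - Bi a p q (Suc c)" using \<open>_ = 0\<close> by linarith
          show ?thesis by (simp add: e algebra_simps)
        qed
      qed
      ultimately show "((\<lambda>a. a ^ Suc N * Bi a p (Suc q) c) \<longlongrightarrow> 0) (at_right 0)"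
        using tendsto_cong by force
    qed
  qed
  have chain: "k \<le> N \<longrightarrow> ((\<lambda>a. a ^ Suc N * (Bi a N 0 0 - (-1) ^ k * Bi a (N - k) k 0)) \<longlongrightarrow> 0) (at_right 0)" for k
  proof (induction k)
    case 0
    show ?case by simp
  next
    case (Suc k)
    show ?case
    proof
      assume k: "Suc k \<le> N"
      define p where "p = N - Suc k"
      have pk: "Suc p = N - k" "p < N" "k < N" "p + k + 1 \<le> N" using k by (auto simp: p_def)
      have l1: "((\<lambda>a. a ^ Suc N * (Bi a N 0 0 - (-1) ^ k * Bi a (Suc p) k 0)) \<longlongrightarrow> 0) (at_right 0)"
        using Suc.IH k pk by simp
      have l2: "((\<lambda>a. a ^ Suc N * Bi a p k 1) \<longlongrightarrow> 0) (at_right 0)"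
        using good[of k] pk by auto
      have "((\<lambda>a. a ^ Suc N * (Bi a N 0 0 - (-1) ^ k * Bi a (Suc p) k 0) - (-1) ^ k * (a ^ Suc N * Bi a p k 1)) \<longlongrightarrow> 0 - (-1) ^ k * 0) (at_right 0)"
        by (intro tendsto_intros l1 l2)
      moreover have "eventually (\<lambda>a. a ^ Suc N * (Bi a N 0 0 - (-1) ^ k * Bi a (Suc p) k 0) - (-1) ^ k * (a ^ Suc N * Bi a p k 1)
          = a ^ Suc N * (Bi a N 0 0 - (-1) ^ Suc k * Bi a (N - Suc k) (Suc k) 0)) (at_right 0)"
      proof (rule eventually_mono[OF ev])
        fix a assume a: "a \<in> {0<..<\<alpha>0}"
        have "Bi a (Suc p) k 0 + Bi a p (Suc k) 0 + Bi a p k (Suc 0) = 0"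
          using IBP[OF a pk(2,3)] by simp
        then show "a ^ Suc N * (Bi a N 0 0 - (-1) ^ k * Bi a (Suc p) k 0) - (-1) ^ k * (a ^ Suc N * Bi a p k 1)
          = a ^ Suc N * (Bi a N 0 0 - (-1) ^ Suc k * Bi a (N - Suc k) (Suc k) 0)"
        proof -
          have e: "Bi a p (Suc k) 0 = - Bi a (Suc p) k 0 - Bi a p k 1" using \<open>_ = 0\<close> by simp
          show ?thesis unfolding p_def[symmetric] by (simp add: e algebra_simps)
        qed
      qed
      ultimately show "((\<lambda>a. a ^ Suc N * (Bi a N 0 0 - (-1) ^ Suc k * Bi a (N - Suc k) (Suc k) 0)) \<longlongrightarrow> 0) (at_right 0)"
        using tendsto_cong by force
    qed
  qed
  have sym: "Bi a 0 N 0 = Bi a N 0 0" for a unfolding Bi_def by (simp add: mult_ac)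
  have "((\<lambda>a. a ^ Suc N * (Bi a N 0 0 - (-1) ^ N * Bi a (N - N) N 0)) \<longlongrightarrow> 0) (at_right 0)"
    using chain[of N] by simp
  then have "((\<lambda>a. a ^ Suc N * (2 * Bi a N 0 0)) \<longlongrightarrow> 0) (at_right 0)"
    by (simp add: Nodd sym)
  then have "((\<lambda>a. (1/2) * (a ^ Suc N * (2 * Bi a N 0 0))) \<longlongrightarrow> (1/2) * 0) (at_right 0)"
    by (intro tendsto_intros)
  then have lim: "((\<lambda>a. a ^ Suc N * Bi a N 0 0) \<longlongrightarrow> 0) (at_right 0)"
    by (simp add: mult_ac)
  have eq: "(\<integral>x. (deriv ^^ (2*n)) (ubar a) x * deriv (ubar a) x * f x \<partial>lborel) = Bi a N 0 0"
    if a: "a \<in> {0<..<\<alpha>0}" for a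
  proof -
    define g where "g = (\<lambda>x. W a N x * W a 0 x * F 0 x)"
    have "(\<integral>x. (deriv ^^ (2*n)) (ubar a) x * deriv (ubar a) x * f x \<partial>lborel) = (\<integral>x. g x \<partial>lborel)"
      by (simp add: g_def W_def F_def N2)
    also have "\<dots> = (\<integral>x. indicator {-R..R} x *\<^sub>R g x \<partial>lborel)"
    proof (intro Bochner_Integration.integral_cong refl)
      fix x
      show "g x = indicator {-R..R} x *\<^sub>R g x"
      proof (cases "x \<in> {-R..R}")
        case False
        then have "\<bar>x\<bar> > B" using RB by auto
        then show ?thesis using Fzero[of x 0] False by (simp add: g_def)
      qed simp
    qed
    also have "\<dots> = (LINT x : {-R..R} | lborel. g x)" by (simp add: set_lebesgue_integral_def)
    also have "\<dots> = integral {-R..R} g"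
      by (intro set_borel_integral_eq_integral borel_integrable_atLeastAtMost')
         (unfold g_def; intro continuous_on_mult continuous_on_subset[OF Wcont[OF a]] continuous_on_subset[OF Fcont]; auto)
    finally show ?thesis by (simp add: g_def Bi_def)
  qed
  show ?thesis
    by (rule iffD1[OF tendsto_cong lim]) (rule eventually_mono[OF ev], subst eq, assumption, simp add: N2)
qed

end
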